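(* Let $m$ be a non-negative integer, let $A$ and $D$ be two $k$-tuples of elements of $\mathbb{Z}/m\mathbb{Z}$, and let $p_1,p_2$ be positive integers with $k\mid p_1$. Then the orbit of $S=\mathrm{IAP}(A,D)$ is $(p_1,p_2)$-periodic if and only if $\pi_{m/\gcd(p_1/k,m)}(D)=0$ and the $1\times 2k$ block row $(A\mid D)$ lies in $\mathrm{Lker}_m\,P$, where $$P=\begin{pmatrix} W & 0_k\\ T_k^{(p_2)} & W\end{pmatrix},\qquad W=C_k^{(p_2)}+(-1)^{p_2+1}I_k .$$
   Context: $\mathbb{Z}/0\mathbb{Z}=\mathbb{Z}$. For $d\mid m$, $\pi_d$ is reduction from $\mathbb{Z}/m\mathbb{Z}$ to $\mathbb{Z}/d\mathbb{Z}$, applied entrywise. For $k$-tuples $A=(a_0,\dots,a_{k-1})$, $D=(d_0,\dots,d_{k-1})$, $\mathrm{IAP}(A,D)$ is the sequence $(u_j)_{j\in\mathbb{Z}}$ with $u_{qk+r}=a_r+qd_r$ ($q\in\mathbb{Z}$, $0\le r\le k-1$). The orbit of a sequence $(u_j)_{j\in\mathbb{Z}}$ is $(a_{i,j})_{(i,j)\in\mathbb{N}\times\mathbb{Z}}$ with $a_{0,j}=u_j$, $a_{i,j}=-a_{i-1,j}-a_{i-1,j+1}$ for $i\ge1$; it is $(p,q)$-periodic if $a_{i+q,j}=a_{i,j+p}=a_{i,j}$ for all $(i,j)$. $C_k^{(i)}$ is the $k\times k$ integer matrix $\big(\sum_{\alpha\in\mathbb{Z}}\binom{i}{\alpha k+r-s}\big)_{1\le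 r,s\le k}$ and $T_k^{(i)}=\big(\sum_{\alpha\in\mathbb{Z}}\alpha\binom{i}{\alpha k+r-s}\big)_{1\le r,s\le k}$, where $\binom{a}{b}=0$ if $b<0$ or $b>a$. For an $n_1\times n_2$ integer matrix $M$, $\mathrm{Lker}_m M=\{X\in(\mathbb{Z}/m\mathbb{Z})^{n_1}: X\,\pi_m(M)=0\}$ (row vectors). *)

theory Defs
  imports "HOL-Number_Theory.Number_Theory"
begin

text \<open>Elements of Z/mZ are represented by integer representatives; equality in Z/mZ
  is congruence modulo m (for m = 0 this is equality in Z).
  k-tuples are functions nat => int, only indices 0..k-1 matter.
  Matrices are functions nat => nat => int with 0-based indices.\<close>

definition IAP :: "nat \<Rightarrow> (nat \<Rightarrow> int) \<Rightarrow> (nat \<Rightarrow> int) \<Rightarrow> int \<Rightarrow> int" where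
  "IAP k A D j = A (nat (j mod int k)) + (j div int k) * D (nat (j mod int k))"

fun orbit :: "(int \<Rightarrow> int) \<Rightarrow> nat \<Rightarrow> int \<Rightarrow> int" where
  "orbit u 0 j = u j"
| "orbit u (Suc i) j = - orbit u i j - orbit u i (j + 1)"

definition orbit_periodic :: "nat \<Rightarrow> (int \<Rightarrow> int) \<Rightarrow> nat \<Rightarrow> nat \<Rightarrow> bool" where
  "orbit_periodic m u p q \<longleftrightarrow>
     (\<forall>i j. [orbit u (i + q) j = orbit u i j] (mod int m)
          \<and> [orbit u i (j + int p) = orbit u i j] (mod int m))"

definition binomz :: "nat \<Rightarrow> int \<Rightarrow> int" where
  "binomz i b = (if 0 \<le> b \<and> b \<le> int i then int (i choose nat b) else 0)"

definition Cmat :: "nat \<Rightarrow> nat \<Rightarrow> nat \<Rightarrow> nat \<Rightarrow> int" where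
  "Cmat k i r s = (\<Sum>\<alpha> \<in> {\<alpha>::int. 0 \<le> \<alpha> * int k + int r - int s \<and> \<alpha> * int k + int r - int s \<le> int i}.
                     binomz i (\<alpha> * int k + int r - int s))"

definition Tmat :: "nat \<Rightarrow> nat \<Rightarrow> nat \<Rightarrow> nat \<Rightarrow> int" where
  "Tmat k i r s = (\<Sum>\<alpha> \<in> {\<alpha>::int. 0 \<le> \<alpha> * int k + int r - int s \<and> \<alpha> * int k + int r - int s \<le> int i}.
                     \<alpha> * binomz i (\<alpha> * int k + int r - int s))"

definition Wmat :: "nat \<Rightarrow> nat \<Rightarrow> nat \<Rightarrow> nat \<Rightarrow> int" where
  "Wmat k p2 r s = Cmat k p2 r s + (-1) ^ (p2 + 1) * (if r = s then 1 else 0)"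

definition Pmat :: "nat \<Rightarrow> nat \<Rightarrow> nat \<Rightarrow> nat \<Rightarrow> int" where
  "Pmat k p2 r s =
     (if r < k \<and> s < k then Wmat k p2 r s
      else if r < k then 0
      else if s < k then Tmat k p2 (r - k) s
      else Wmat k p2 (r - k) (s - k))"

definition in_Lker :: "nat \<Rightarrow> nat \<Rightarrow> nat \<Rightarrow> (nat \<Rightarrow> nat \<Rightarrow> int) \<Rightarrow> (nat \<Rightarrow> int) \<Rightarrow> bool" where
  "in_Lker m n1 n2 M X \<longleftrightarrow> (\<forall>s < n2. [(\<Sum>r < n1. X r * M r s) = 0] (mod int m))"

definition block_row :: "nat \<Rightarrow> (nat \<Rightarrow> int) \<Rightarrow> (nat \<Rightarrow> int) \<Rightarrow> nat \<Rightarrow> int" where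
  "block_row k A D r = (if r < k then A r else D (r - k))"

end

theory Submission
  imports Defs
begin


lemma sum_split_add: "(\<Sum>r<(a::nat)+b. f r) = (\<Sum>r<a. f r) + (\<Sum>r<b. (f (a + r)::int))"
  by (induction b) (simp_all add: add_ac)

lemma binom_step:
  fixes f :: "nat \<Rightarrow> int"
  shows "(\<Sum>t\<le>Suc i. int (Suc i choose t) * f t) =
         (\<Sum>t\<le>i. int (i choose t) * f t) + (\<Sum>t\<le>i. int (i choose t) * f (Suc t))"
proof -
  have a: "(\<Sum>t\<le>Suc i. int (Suc i choose t) * f t) =
     f 0 + (\<Sum>t\<le>i. int (i choose t) * f (Suc t)) + (\<Sum>t\<le>i. int (i choose Suc t) * f (Suc t))"
    unfolding sum.atMost_Suc_shift by (simp del: sum.atMost_Suc add: sum.distrib algebra_simps)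
  have b: "(\<Sum>t\<le>i. int (i choose t) * f t) = f 0 + (\<Sum>t\<le>i. int (i choose Suc t) * f (Suc t))"
  proof -
    have "(\<Sum>t\<le>Suc i. int (i choose t) * f t) = f 0 + (\<Sum>t\<le>i. int (i choose Suc t) * f (Suc t))"
      unfolding sum.atMost_Suc_shift by (simp del: sum.atMost_Suc)
    moreover have "(\<Sum>t\<le>Suc i. int (i choose t) * f t) = (\<Sum>t\<le>i. int (i choose t) * f t)"
      by simp
    ultimately show ?thesis by simp
  qed
  show ?thesis using a b by simp
qed

lemma orbit_closed:
  "orbit u i j = (-1)^i * (\<Sum>t\<le>i. int (i choose t) * u (j + int t))"
proof (induction i arbitrary: j)
  case 0
  then show ?case by simp
next
  case (Suc i)
  have "orbit u (Suc i) j = - orbit u i j - orbit u i (j + 1)" by simp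
  also have "\<dots> = (-1)^Suc i * ((\<Sum>t\<le>i. int (i choose t) * u (j + int t)) +
       (\<Sum>t\<le>i. int (i choose t) * u (j + int (Suc t))))"
    by (simp add: Suc.IH algebra_simps)
  also have "\<dots> = (-1)^Suc i * (\<Sum>t\<le>Suc i. int (Suc i choose t) * u (j + int t))"
    using binom_step[of i "\<lambda>t. u (j + int t)"] by simp
  finally show ?case .
qed

lemma horiz:
  "(\<forall>i j. [orbit u i (j + p) = orbit u i j] (mod m)) \<longleftrightarrow> (\<forall>j. [u (j + p) = u j] (mod m))"
proof
  assume "\<forall>i j. [orbit u i (j + p) = orbit u i j] (mod m)"
  from this[rule_format, of 0] show "\<forall>j. [u (j + p) = u j] (mod m)" by simp
next
  assume h: "\<forall>j. [u (j + p) = u j] (mod m)"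
  show "\<forall>i j. [orbit u i (j + p) = orbit u i j] (mod m)"
  proof (intro allI)
    fix i j show "[orbit u i (j + p) = orbit u i j] (mod m)"
    proof (induction i arbitrary: j)
      case 0 then show ?case using h by simp
    next
      case (Suc i)
      have e: "j + p + 1 = (j + 1) + p" by simp
      show ?case using Suc.IH[of j] Suc.IH[of "j+1"] unfolding orbit.simps e
        by (intro cong_diff cong_minus_minus_iff[THEN iffD2]) auto
    qed
  qed
qed

lemma vert:
  "(\<forall>i j. [orbit u (i + q) j = orbit u i j] (mod m)) \<longleftrightarrow> (\<forall>j. [orbit u q j = u j] (mod m))"
proof
  assume "\<forall>i j. [orbit u (i + q) j = orbit u i j] (mod m)"
  from this[rule_format, of 0] show "\<forall>j. [orbit u q j = u j] (mod m)" by simp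
next
  assume h: "\<forall>j. [orbit u q j = u j] (mod m)"
  show "\<forall>i j. [orbit u (i + q) j = orbit u i j] (mod m)"
  proof (intro allI)
    fix i j show "[orbit u (i + q) j = orbit u i j] (mod m)"
    proof (induction i arbitrary: j)
      case 0 then show ?case using h by simp
    next
      case (Suc i)
      show ?case using Suc.IH[of j] Suc.IH[of "j+1"] unfolding add_Suc orbit.simps
        by (intro cong_diff cong_minus_minus_iff[THEN iffD2]) auto
    qed
  qed
qed

lemma cong_mult_zero_iff:
  fixes c m :: nat and d :: int
  assumes "0 < c"
  shows "[int c * d = 0] (mod int m) \<longleftrightarrow> [d = 0] (mod int (m div gcd c m))"
proof -
  define g where "g = gcd c m"
  have gp: "g > 0" using assms by (simp add: g_def)
  obtain c' m' where c: "c = g * c'" and m: "m = g * m'" unfolding g_def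
    by (meson gcd_dvd1 gcd_dvd2 dvdE)
  have cop: "coprime c' m'"
    using c m gp g_def by (metis coprime_iff_gcd_eq_1 gcd_mult_distrib_nat mult.right_neutral nat_mult_eq_cancel1)
  have md: "m div g = m'" using m gp by simp
  have "[int c * d = 0] (mod int m) \<longleftrightarrow> int g * int m' dvd int g * (int c' * d)"
    by (simp add: cong_0_iff c m mult.assoc)
  also have "\<dots> \<longleftrightarrow> int m' dvd int c' * d" using gp by simp
  also have "\<dots> \<longleftrightarrow> int m' dvd d" using cop
    by (metis coprime_commute coprime_dvd_mult_right_iff coprime_int_iff)
  finally show ?thesis using md by (simp add: cong_0_iff g_def)
qed



lemma iap_decomp:
  assumes "0 < k"
  shows "IAP k A D (Q * int k + x) = A (nat (x mod int k)) + (Q + x div int k) * D (nat (x mod int k))"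
  using assms unfolding IAP_def by (simp add: add.commute)

lemma divmod_lin:
  assumes "0 < k" "r < k"
  shows "(\<alpha> * int k + int r) div int k = \<alpha>" "(\<alpha> * int k + int r) mod int k = int r"
  using assms by (simp_all add: add.commute)

lemma inner_reindex:
  assumes k: "0 < k" and r: "r < k"
  shows "(\<Sum>\<alpha>\<in>{\<alpha>::int. 0 \<le> \<alpha> * int k + int r - int s \<and> \<alpha> * int k + int r - int s \<le> int q}.
            binomz q (\<alpha> * int k + int r - int s) * (A r + (Q + \<alpha>) * D r))
       = (\<Sum>t\<in>{t. t \<le> q \<and> nat ((int s + int t) mod int k) = r}.
            int (q choose t) * (A r + (Q + (int s + int t) div int k) * D r))"
proof (rule sum.reindex_bij_witness[where i = "\<lambda>t. (int s + int t) div int k"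
        and j = "\<lambda>\<alpha>. nat (\<alpha> * int k + int r - int s)"])
  fix \<alpha> assume "\<alpha> \<in> {\<alpha>::int. 0 \<le> \<alpha> * int k + int r - int s \<and> \<alpha> * int k + int r - int s \<le> int q}"
  then have a1: "0 \<le> \<alpha> * int k + int r - int s" and a2: "\<alpha> * int k + int r - int s \<le> int q" by auto
  have e: "int s + int (nat (\<alpha> * int k + int r - int s)) = \<alpha> * int k + int r" using a1 by simp
  show "(int s + int (nat (\<alpha> * int k + int r - int s))) div int k = \<alpha>"
    unfolding e using divmod_lin[OF k r] by simp
  show "nat (\<alpha> * int k + int r - int s) \<in> {t. t \<le> q \<and> nat ((int s + int t) mod int k) = r}"
    unfolding mem_Collect_eq e using divmod_lin[OF k r] a2 by simp
  show "int (q choose nat (\<alpha> * int k + int r - int s)) *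
        (A r + (Q + (int s + int (nat (\<alpha> * int k + int r - int s))) div int k) * D r) =
        binomz q (\<alpha> * int k + int r - int s) * (A r + (Q + \<alpha>) * D r)"
    unfolding e divmod_lin[OF k r] binomz_def using a1 a2 by simp
next
  fix t assume "t \<in> {t. t \<le> q \<and> nat ((int s + int t) mod int k) = r}"
  then have t1: "t \<le> q" and t2: "(int s + int t) mod int k = int r" using k by auto
  have dm: "(int s + int t) div int k * int k + int r = int s + int t"
    using div_mult_mod_eq[of "int s + int t" "int k"] t2 by simp
  have e: "(int s + int t) div int k * int k + int r - int s = int t" using dm by simp
  show "nat ((int s + int t) div int k * int k + int r - int s) = t" unfolding e by simp
  show "(int s + int t) div int k \<in> {\<alpha>::int. 0 \<le> \<alpha> * int k + int r - int s \<and> \<alpha> * int k + int r - int s \<le> int q}"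
    unfolding mem_Collect_eq e using t1 by simp
qed

lemma CT_combine:
  "Cmat k q r s * (A r + Q * D r) + Tmat k q r s * D r =
   (\<Sum>\<alpha>\<in>{\<alpha>::int. 0 \<le> \<alpha> * int k + int r - int s \<and> \<alpha> * int k + int r - int s \<le> int q}.
            binomz q (\<alpha> * int k + int r - int s) * (A r + (Q + \<alpha>) * D r))"
  unfolding Cmat_def Tmat_def sum_distrib_right sum.distrib[symmetric]
  by (rule sum.cong) (auto simp: algebra_simps)

lemma regroup:
  assumes k: "0 < k" and s: "s < k"
  shows "(\<Sum>t\<le>q. int (q choose t) * IAP k A D (Q * int k + int s + int t)) =
         (\<Sum>r<k. Cmat k q r s * (A r + Q * D r) + Tmat k q r s * D r)"
proof -
  define g where "g t = int (q choose t) * (A (nat ((int s + int t) mod int k)) +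
      (Q + (int s + int t) div int k) * D (nat ((int s + int t) mod int k)))" for t
  have "(\<Sum>t\<le>q. int (q choose t) * IAP k A D (Q * int k + int s + int t)) = (\<Sum>t\<le>q. g t)"
    unfolding g_def using iap_decomp[OF k, of A D Q] by (simp add: add.assoc)
  also have "\<dots> = (\<Sum>r<k. \<Sum>t\<in>{t. t \<in> {..q} \<and> nat ((int s + int t) mod int k) = r}. g t)"
  proof (rule sum.group[symmetric])
    show "(\<lambda>t. nat ((int s + int t) mod int k)) ` {..q} \<subseteq> {..<k}"
      using k by (auto simp: nat_less_iff)
  qed auto
  also have "\<dots> = (\<Sum>r<k. Cmat k q r s * (A r + Q * D r) + Tmat k q r s * D r)"
  proof (rule sum.cong[OF refl])
    fix r assume "r \<in> {..<k}"
    then have r: "r < k" by simp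
    have "(\<Sum>t\<in>{t. t \<in> {..q} \<and> nat ((int s + int t) mod int k) = r}. g t) =
       (\<Sum>t\<in>{t. t \<le> q \<and> nat ((int s + int t) mod int k) = r}.
            int (q choose t) * (A r + (Q + (int s + int t) div int k) * D r))"
      by (rule sum.cong) (auto simp: g_def)
    then show "(\<Sum>t\<in>{t. t \<in> {..q} \<and> nat ((int s + int t) mod int k) = r}. g t) =
        Cmat k q r s * (A r + Q * D r) + Tmat k q r s * D r"
      using inner_reindex[OF k r, where s=s and q=q and A=A and Q=Q and D=D] CT_combine[where k=k and q=q and r=r and s=s and A=A and Q=Q and D=D] by simp
  qed
  finally show ?thesis .
qed



lemma lker_split:
  "in_Lker m (2 * k) (2 * k) (Pmat k q) (block_row k A D) \<longleftrightarrow>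
   (\<forall>s<k. [(\<Sum>r<k. A r * Wmat k q r s) + (\<Sum>r<k. D r * Tmat k q r s) = 0] (mod int m)) \<and>
   (\<forall>s<k. [(\<Sum>r<k. D r * Wmat k q r s) = 0] (mod int m))"
proof -
  have sp: "(\<Sum>r<2*k. block_row k A D r * Pmat k q r s) =
     (\<Sum>r<k. A r * Pmat k q r s) + (\<Sum>r<k. D r * Pmat k q (k + r) s)" for s
    unfolding mult_2 sum_split_add by (simp add: block_row_def)
  have c1: "(\<Sum>r<2*k. block_row k A D r * Pmat k q r s) =
     (\<Sum>r<k. A r * Wmat k q r s) + (\<Sum>r<k. D r * Tmat k q r s)" if "s < k" for s
    unfolding sp using that by (simp add: Pmat_def)
  have c2: "(\<Sum>r<2*k. block_row k A D r * Pmat k q r (k + s)) =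
     (\<Sum>r<k. D r * Wmat k q r s)" for s
    unfolding sp by (simp add: Pmat_def)
  have "(\<forall>s<2*k. P s) \<longleftrightarrow> (\<forall>s<k. P s) \<and> (\<forall>s<k. P (k + s))" for P
    by (metis add_less_cancel_left le_add_diff_inverse mult_2 not_less trans_less_add1)
  then show ?thesis unfolding in_Lker_def using c1 c2 by simp
qed

lemma sum_delta_int: "s < (k::nat) \<Longrightarrow> (\<Sum>r<k. (f r :: int) * (if r = s then 1 else 0)) = f s"
proof -
  assume "s < k"
  have "(\<Sum>r<k. (f r :: int) * (if r = s then 1 else 0)) = (\<Sum>r<k. if r = s then f s else 0)"
    by (rule sum.cong) auto
  also have "\<dots> = f s" using \<open>s < k\<close> sum.delta[of "{..<k}" s "\<lambda>_. f s"] by simp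
  finally show ?thesis .
qed

lemma affine_cong:
  "(\<forall>Q::int. [(-1)^q * (e0 + Q * e1) = (0::int)] (mod m)) \<longleftrightarrow> [e0 = 0] (mod m) \<and> [e1 = 0] (mod m)"
proof -
  have u: "[(-1)^q * x = (0::int)] (mod m) \<longleftrightarrow> [x = 0] (mod m)" for x
  proof
    assume "[(-1)^q * x = (0::int)] (mod m)"
    then have "[(-1)^q * ((-1)^q * x) = (-1)^q * 0] (mod m)" by (rule cong_scalar_left)
    then show "[x = 0] (mod m)" by (simp flip: power_mult_distrib mult.assoc)
  next
    assume "[x = 0] (mod m)" then show "[(-1)^q * x = (0::int)] (mod m)"
      using cong_scalar_left by fastforce
  qed
  show ?thesis unfolding u
  proof
    assume h: "\<forall>Q::int. [e0 + Q * e1 = 0] (mod m)"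
    have a: "[e0 = 0] (mod m)" using h[rule_format, of 0] by simp
    have "[e0 + e1 = 0] (mod m)" using h[rule_format, of 1] by simp
    then have "[e0 + e1 - e0 = 0 - 0] (mod m)" using a by (rule cong_diff)
    then show "[e0 = 0] (mod m) \<and> [e1 = 0] (mod m)" using a by simp
  next
    assume "[e0 = 0] (mod m) \<and> [e1 = 0] (mod m)"
    then show "\<forall>Q::int. [e0 + Q * e1 = 0] (mod m)"
      by (metis add.right_neutral cong_add cong_scalar_left mult_zero_right)
  qed
qed



lemma alg_id:
  fixes x :: int assumes "x * x = 1"
  shows "x * (a + b + Q * c) - (A + Q * D) = x * ((a + (-1) * x * A) + b + Q * (c + (-1) * x * D))"
proof -
  have "x * ((a + (-1) * x * A) + b + Q * (c + (-1) * x * D)) = x * (a + b + Q * c) - (x * x) * (A + Q * D)"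
    by (simp add: algebra_simps)
  then show ?thesis using assms by simp
qed

lemma vert_iap:
  assumes k: "0 < k"
  shows "(\<forall>j. [orbit (IAP k A D) q j = IAP k A D j] (mod int m)) \<longleftrightarrow>
   (\<forall>s<k. [(\<Sum>r<k. A r * Wmat k q r s) + (\<Sum>r<k. D r * Tmat k q r s) = 0] (mod int m)) \<and>
   (\<forall>s<k. [(\<Sum>r<k. D r * Wmat k q r s) = 0] (mod int m))"
proof -
  define E0 where "E0 s = (\<Sum>r<k. A r * Wmat k q r s) + (\<Sum>r<k. D r * Tmat k q r s)" for s
  define E1 where "E1 s = (\<Sum>r<k. D r * Wmat k q r s)" for s
  have key: "orbit (IAP k A D) q (Q * int k + int s) - IAP k A D (Q * int k + int s)
      = (-1)^q * (E0 s + Q * E1 s)" if s: "s < k" for Q s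
  proof -
    have sq: "((-1::int)^q) * (-1)^q = 1" by (simp flip: power_mult_distrib)
    have w: "(\<Sum>r<k. f r * Wmat k q r s) = (\<Sum>r<k. f r * Cmat k q r s) + (-1)^(q+1) * f s" for f
    proof -
      have "(\<Sum>r<k. f r * ((-1)^(q+1) * (if r = s then 1 else 0))) =
            (-1)^(q+1) * (\<Sum>r<k. f r * (if r = s then 1 else 0))"
        by (simp add: sum_distrib_left mult.left_commute)
      then show ?thesis
        unfolding Wmat_def distrib_left sum.distrib using sum_delta_int[OF s, of f] by simp
    qed
    have o: "orbit (IAP k A D) q (Q * int k + int s) =
       (-1)^q * (\<Sum>r<k. Cmat k q r s * (A r + Q * D r) + Tmat k q r s * D r)"
      unfolding orbit_closed using regroup[OF k s, of q A D Q] by (simp add: add.assoc)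
    have i: "IAP k A D (Q * int k + int s) = A s + Q * D s"
      using iap_decomp[OF k, of A D Q "int s"] s divmod_lin[OF k s, of 0] by simp
    have "(\<Sum>r<k. Cmat k q r s * (A r + Q * D r) + Tmat k q r s * D r) =
          (\<Sum>r<k. A r * Cmat k q r s) + (\<Sum>r<k. D r * Tmat k q r s) + Q * (\<Sum>r<k. D r * Cmat k q r s)"
      by (simp add: sum.distrib sum_distrib_left algebra_simps)
    then show ?thesis unfolding o i E0_def E1_def w[of A] w[of D]
      using alg_id[OF sq] by simp
  qed
  have eq: "[orbit (IAP k A D) q (Q * int k + int s) = IAP k A D (Q * int k + int s)] (mod int m)
     \<longleftrightarrow> [(-1)^q * (E0 s + Q * E1 s) = 0] (mod int m)" if "s < k" for Q s
    using key[OF that, of Q] cong_diff_iff_cong_0 by metis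
  have allj: "(\<forall>j. P j) \<longleftrightarrow> (\<forall>s<k. \<forall>Q. P (Q * int k + int s))" for P
  proof
    assume h: "\<forall>s<k. \<forall>Q. P (Q * int k + int s)"
    show "\<forall>j. P j"
    proof
      fix j
      have "j = j div int k * int k + int (nat (j mod int k))" using k by simp
      moreover have "nat (j mod int k) < k" using k by (simp add: nat_less_iff)
      ultimately show "P j" using h by metis
    qed
  qed auto
  have "(\<forall>j. [orbit (IAP k A D) q j = IAP k A D j] (mod int m)) \<longleftrightarrow>
        (\<forall>s<k. \<forall>Q. [(-1)^q * (E0 s + Q * E1 s) = 0] (mod int m))"
      proof (subst allj, intro iffI allI impI)
    fix s Q assume "\<forall>s<k. \<forall>Q. [orbit (IAP k A D) q (Q * int k + int s) = IAP k A D (Q * int k + int s)] (mod int m)" "s < k"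
    then show "[(-1)^q * (E0 s + Q * E1 s) = 0] (mod int m)" using eq[of s Q] by blast
  next
    fix s Q assume "\<forall>s<k. \<forall>Q. [(-1)^q * (E0 s + Q * E1 s) = 0] (mod int m)" "s < k"
    then show "[orbit (IAP k A D) q (Q * int k + int s) = IAP k A D (Q * int k + int s)] (mod int m)" using eq[of s Q] by blast
  qed
  also have "\<dots> \<longleftrightarrow> (\<forall>s<k. [E0 s = 0] (mod int m) \<and> [E1 s = 0] (mod int m))"
    using affine_cong by blast
  finally show ?thesis unfolding E0_def E1_def by blast
qed

lemma horiz_iap:
  assumes k: "0 < k" and p: "p1 = c * k" and c: "0 < c"
  shows "(\<forall>j. [IAP k A D (j + int p1) = IAP k A D j] (mod int m)) \<longleftrightarrow>
         (\<forall>r<k. [D r = 0] (mod int (m div gcd c m)))"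
proof -
  have e: "IAP k A D (j + int p1) - IAP k A D j = int c * D (nat (j mod int k))" for j
    unfolding IAP_def p using k by (simp add: algebra_simps)
  have "(\<forall>j. [IAP k A D (j + int p1) = IAP k A D j] (mod int m)) \<longleftrightarrow>
        (\<forall>j. [int c * D (nat (j mod int k)) = 0] (mod int m))"
    using e by (simp add: cong_iff_dvd_diff cong_0_iff)
  also have "\<dots> \<longleftrightarrow> (\<forall>r<k. [int c * D r = 0] (mod int m))"
  proof
    assume h: "\<forall>j. [int c * D (nat (j mod int k)) = 0] (mod int m)"
    show "\<forall>r<k. [int c * D r = 0] (mod int m)"
    proof (intro allI impI)
      fix r assume "r < k"
      then show "[int c * D r = 0] (mod int m)" using h[rule_format, of "int r"] by simp
    qed
  next
    assume "\<forall>r<k. [int c * D r = 0] (mod int m)"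
    then show "\<forall>j. [int c * D (nat (j mod int k)) = 0] (mod int m)"
      using k by (simp add: nat_less_iff)
  qed
  also have "\<dots> \<longleftrightarrow> (\<forall>r<k. [D r = 0] (mod int (m div gcd c m)))"
    using cong_mult_zero_iff[OF c] by simp
  finally show ?thesis .
qed

theorem theorem5:
  fixes m k p1 p2 :: nat and A D :: "nat \<Rightarrow> int"
  assumes "0 < p1" and "0 < p2" and "k dvd p1"
  shows "orbit_periodic m (IAP k A D) p1 p2 \<longleftrightarrow>
           ((\<forall>r < k. [D r = 0] (mod int (m div gcd (p1 div k) m)))
            \<and> in_Lker m (2 * k) (2 * k) (Pmat k p2) (block_row k A D))"
proof -
  have k: "0 < k" using assms by (metis dvd_0_left_iff gr0I less_irrefl)
  have p: "p1 = (p1 div k) * k" using assms by simp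
  have c: "0 < p1 div k" using assms k by (metis p gr0I mult_zero_left less_irrefl)
  have "orbit_periodic m (IAP k A D) p1 p2 \<longleftrightarrow>
     (\<forall>i j. [orbit (IAP k A D) (i + p2) j = orbit (IAP k A D) i j] (mod int m)) \<and>
     (\<forall>i j. [orbit (IAP k A D) i (j + int p1) = orbit (IAP k A D) i j] (mod int m))"
    unfolding orbit_periodic_def by blast
  also have "\<dots> \<longleftrightarrow> (\<forall>j. [orbit (IAP k A D) p2 j = IAP k A D j] (mod int m)) \<and>
     (\<forall>j. [IAP k A D (j + int p1) = IAP k A D j] (mod int m))"
    unfolding vert horiz by simp
  finally show ?thesis
    unfolding vert_iap[OF k] horiz_iap[OF k p c] lker_split by blast
qed

end
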